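(* Let $c\geq 1$ be a real number and let $G$ be a finite graph with growth $f_G(r)\leq cr$ for every positive integer $r$. Then $G$ does not contain the $\lceil 2c\rceil\times\lceil 2c\rceil$ grid as a minor.
   Context: The growth of a finite graph $G$ is the function $f_G\colon\mathbb{N}\to\mathbb{N}$ where $f_G(r)$ is the maximum of $|V(H)|$ over all subgraphs $H$ of $G$ of radius at most $r$. For $n\in\mathbb{N}$, the $n\times n$ grid is the graph with vertex set $\{(v_1,v_2): v_1,v_2\in\{1,\dots,n\}\}$ where $(v_1,v_2)$ and $(u_1,u_2)$ are adjacent iff either $v_1=u_1$ and $|v_2-u_2|=1$, or $v_2=u_2$ and $|v_1-u_1|=1$. A graph $H$ is a minor of $G$ if $H$ is isomorphic to a graph obtained from a subgraph of $G$ by contracting edges. *)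

theory Defs
  imports Complex_Main
begin

definition graph :: "'a set \<Rightarrow> ('a \<Rightarrow> 'a \<Rightarrow> bool) \<Rightarrow> bool" where
  "graph V E \<longleftrightarrow> finite V \<and> (\<forall>u v. E u v \<longrightarrow> u \<in> V \<and> v \<in> V \<and> u \<noteq> v \<and> E v u)"

definition subgraph :: "'a set \<Rightarrow> ('a \<Rightarrow> 'a \<Rightarrow> bool) \<Rightarrow> 'a set \<Rightarrow> ('a \<Rightarrow> 'a \<Rightarrow> bool) \<Rightarrow> bool" where
  "subgraph W F V E \<longleftrightarrow> graph W F \<and> W \<subseteq> V \<and> (\<forall>u v. F u v \<longrightarrow> E u v)"

definition radius_le :: "'a set \<Rightarrow> ('a \<Rightarrow> 'a \<Rightarrow> bool) \<Rightarrow> nat \<Rightarrow> bool" where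
  "radius_le W F r \<longleftrightarrow> (\<exists>x\<in>W. \<forall>y\<in>W. ((sup F (=)) ^^ r) x y)"

text \<open>Growth f_G(r): maximum number of vertices of a subgraph of radius at most r
  (the Sup of the empty set of naturals is 0).\<close>
definition growth :: "'a set \<Rightarrow> ('a \<Rightarrow> 'a \<Rightarrow> bool) \<Rightarrow> nat \<Rightarrow> nat" where
  "growth V E r = Sup {card W | W F. subgraph W F V E \<and> radius_le W F r}"

definition grid_V :: "nat \<Rightarrow> (nat \<times> nat) set" where
  "grid_V n = {1..n} \<times> {1..n}"

definition grid_E :: "nat \<Rightarrow> nat \<times> nat \<Rightarrow> nat \<times> nat \<Rightarrow> bool" where
  "grid_E n v u \<longleftrightarrow> v \<in> grid_V n \<and> u \<in> grid_V n \<and>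
     ((fst v = fst u \<and> (snd v = snd u + 1 \<or> snd u = snd v + 1)) \<or>
      (snd v = snd u \<and> (fst v = fst u + 1 \<or> fst u = fst v + 1)))"

definition graph_iso :: "'a set \<Rightarrow> ('a \<Rightarrow> 'a \<Rightarrow> bool) \<Rightarrow> 'b set \<Rightarrow> ('b \<Rightarrow> 'b \<Rightarrow> bool) \<Rightarrow> bool" where
  "graph_iso V1 E1 V2 E2 \<longleftrightarrow>
     (\<exists>f. bij_betw f V1 V2 \<and> (\<forall>u\<in>V1. \<forall>v\<in>V1. E1 u v \<longleftrightarrow> E2 (f u) (f v)))"

text \<open>Contracting the set C of edges of the graph (W,F): the vertices are the
  classes of vertices joined by C-paths, two distinct classes adjacent iff some F-edge joins them.\<close>
definition contract_V :: "'a set \<Rightarrow> ('a \<Rightarrow> 'a \<Rightarrow> bool) \<Rightarrow> 'a set set" where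
  "contract_V W C = {{y. C\<^sup>*\<^sup>* x y} | x. x \<in> W}"

definition contract_E :: "('a \<Rightarrow> 'a \<Rightarrow> bool) \<Rightarrow> 'a set \<Rightarrow> 'a set \<Rightarrow> bool" where
  "contract_E F X Y \<longleftrightarrow> X \<noteq> Y \<and> (\<exists>x\<in>X. \<exists>y\<in>Y. F x y)"

definition minor :: "'b set \<Rightarrow> ('b \<Rightarrow> 'b \<Rightarrow> bool) \<Rightarrow> 'a set \<Rightarrow> ('a \<Rightarrow> 'a \<Rightarrow> bool) \<Rightarrow> bool" where
  "minor VH EH VG EG \<longleftrightarrow>
     (\<exists>W F C. subgraph W F VG EG \<and> subgraph W C W F \<and>
        graph_iso VH EH (contract_V W C) (contract_E F))"

end

theory Submission
  imports Defs
begin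

definition ER :: "('a \<Rightarrow> 'a \<Rightarrow> bool) \<Rightarrow> 'a set \<Rightarrow> 'a \<Rightarrow> 'a \<Rightarrow> bool" where
  "ER E S a b \<longleftrightarrow> E a b \<and> a \<in> S \<and> b \<in> S"

definition conn :: "('a \<Rightarrow> 'a \<Rightarrow> bool) \<Rightarrow> 'a set \<Rightarrow> bool" where
  "conn E S \<longleftrightarrow> (\<forall>u\<in>S. \<forall>v\<in>S. (ER E S)\<^sup>*\<^sup>* u v)"

definition Rq :: "('a \<Rightarrow> 'a \<Rightarrow> bool) \<Rightarrow> 'a set \<Rightarrow> 'a \<Rightarrow> 'a \<Rightarrow> bool" where
  "Rq E S = sup (ER E S) (=)"

lemma Rq_apply: "Rq E S a b \<longleftrightarrow> ER E S a b \<or> a = b"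
  by (simp add: Rq_def)

lemma Rq_mono_set:
  assumes "S \<subseteq> S'" "(Rq E S ^^ t) a b" shows "(Rq E S' ^^ t) a b"
  by (rule relpowp_mono[OF _ assms(2)]) (use assms(1) in \<open>auto simp: ER_def Rq_apply\<close>)

lemma Rq_mono_t:
  assumes "(Rq E S ^^ t) a b" "t \<le> t'" shows "(Rq E S ^^ t') a b"
  using assms(2)
proof (induction t' rule: dec_induct)
  case base then show ?case using assms(1) by simp
next
  case (step m)
  from step(3) show ?case by (rule relpowp_Suc_I) (simp add: Rq_apply)
qed

lemma Rq_in:
  assumes "(Rq E S ^^ t) p y" "p \<in> S" shows "y \<in> S"
  using assms
proof (induction t arbitrary: y)
  case 0 then show ?case by simp
next
  case (Suc t)
  from Suc.prems(1) obtain z where z: "(Rq E S ^^ t) p z" "Rq E S z y" by (rule relpowp_Suc_E)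
  have "z \<in> S" using Suc.IH[OF z(1) Suc.prems(2)] .
  then show ?case using z(2) by (auto simp: ER_def Rq_apply)
qed

lemma exit_edge:
  assumes "R\<^sup>*\<^sup>* a b" "a \<in> S" "b \<notin> S" shows "\<exists>u v. R u v \<and> u \<in> S \<and> v \<notin> S"
  using assms by (induction rule: rtranclp_induct) auto

lemma Rq_restrict:
  assumes "(Rq E Q ^^ t) p y"
  shows "(Rq E {z. (Rq E Q ^^ t) p z} ^^ t) p y"
  using assms
proof (induction t arbitrary: y)
  case 0 then show ?case by simp
next
  case (Suc t)
  from Suc.prems(1) obtain z where z: "(Rq E Q ^^ t) p z" "Rq E Q z y" by (rule relpowp_Suc_E)
  have sub: "{z. (Rq E Q ^^ t) p z} \<subseteq> {z. (Rq E Q ^^ Suc t) p z}"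
    using Rq_mono_t[where E=E and S=Q and t=t and a=p and t'="Suc t"] by auto
  have "(Rq E {z. (Rq E Q ^^ Suc t) p z} ^^ t) p z"
    using Rq_mono_set[OF sub Suc.IH[OF z(1)]] .
  moreover have "z \<in> {z. (Rq E Q ^^ Suc t) p z}" using sub z(1) by auto
  moreover have "y \<in> {z. (Rq E Q ^^ Suc t) p z}" using Suc.prems by auto
  ultimately have "Rq E {z. (Rq E Q ^^ Suc t) p z} z y" using z(2) Suc.prems by (auto simp: ER_def Rq_apply)
  with \<open>(Rq E {z. (Rq E Q ^^ Suc t) p z} ^^ t) p z\<close> show ?case by (rule relpowp_Suc_I)
qed

lemma bfs:
  assumes "finite Q" "conn E Q" "p \<in> Q"
  shows "min (Suc t) (card Q) \<le> card {y. (Rq E Q ^^ t) p y}"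
  using assms
proof (induction t)
  case 0
  then show ?case by simp
next
  case (Suc t)
  define N where "N t = {y. (Rq E Q ^^ t) p y}" for t
  have NQ: "N s \<subseteq> Q" for s using Rq_in[where E=E and S=Q and t=s and p=p] assms(3) by (auto simp: N_def)
  have fin: "finite (N s)" for s using NQ assms(1) finite_subset by blast
  have mono: "N t \<subseteq> N (Suc t)" using Rq_mono_t[where E=E and S=Q and t=t and a=p and t'="Suc t"] by (auto simp: N_def)
  show ?case
  proof (cases "N t = Q")
    case True
    then have "N (Suc t) = Q" using mono NQ by auto
    then show ?thesis by (simp add: N_def)
  next
    case False
    then obtain y where y: "y \<in> Q" "y \<notin> N t" using NQ by auto
    have "(ER E Q)\<^sup>*\<^sup>* p y" using assms(2,3) y(1) by (auto simp: conn_def)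
    moreover have "p \<in> N t"
      using Rq_mono_t[where E=E and S=Q and t=0 and a=p and b=p and t'=t] by (simp add: N_def)
    ultimately obtain u v where uv: "ER E Q u v" "u \<in> N t" "v \<notin> N t"
      using exit_edge[of "ER E Q" p y "N t"] y(2) by blast
    have "Rq E Q u v" using uv(1) by (simp add: Rq_apply)
    with uv(2) have "(Rq E Q ^^ Suc t) p v" unfolding N_def by (auto intro: relpowp_Suc_I)
    then have "v \<in> N (Suc t)" by (simp add: N_def)
    then have "N t \<subset> N (Suc t)" using mono uv(3) by auto
    then have "card (N t) < card (N (Suc t))" using fin by (simp add: psubset_card_mono)
    moreover have "min (Suc t) (card Q) \<le> card (N t)" using Suc.IH assms unfolding N_def by blast
    ultimately have "min (Suc (Suc t)) (card Q) \<le> card (N (Suc t))" by linarith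
    then show ?thesis unfolding N_def .
  qed
qed

lemma growth_ge:
  assumes "graph V E" "subgraph W F V E" "radius_le W F r"
  shows "card W \<le> growth V E r"
proof -
  have fin: "finite V" using assms(1) by (simp add: graph_def)
  have mem: "card W \<in> {card W | W F. subgraph W F V E \<and> radius_le W F r}" using assms(2,3) by blast
  have "bdd_above {card W | W F. subgraph W F V E \<and> radius_le W F r}"
    unfolding bdd_above_def using fin by (auto simp: subgraph_def intro!: card_mono)
  with mem show ?thesis unfolding growth_def by (rule cSup_upper)
qed

lemma core:
  fixes c :: real
  assumes g: "graph V E" and gr: "\<forall>r::nat. r > 0 \<longrightarrow> real (growth V E r) \<le> c * real r"
    and c: "c > 0" and n: "2 * c \<le> real n"
    and A: "A \<subseteq> V" "conn E A" "2 \<le> card A"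
    and Q: "\<forall>j\<in>{1..n}. Q j \<subseteq> V \<and> conn E (Q j) \<and> Q j \<inter> A \<noteq> {} \<and> card A \<le> card (Q j)"
    and disj: "\<forall>j\<in>{1..n}. \<forall>j'\<in>{1..n}. j \<noteq> j' \<longrightarrow> Q j \<inter> Q j' = {}"
  shows False
proof -
  have finV: "finite V" using g by (simp add: graph_def)
  have Esym: "E u v \<Longrightarrow> E v u \<and> u \<noteq> v \<and> u \<in> V \<and> v \<in> V" for u v using g by (auto simp: graph_def)
  have finA: "finite A" using A(1) finV finite_subset by blast
  define k where "k = card A"
  have k2: "k \<ge> 2" using A(3) by (simp add: k_def)
  have "A \<noteq> {}" using A(3) by auto
  then obtain x where x: "x \<in> A" by blast
  have Aall: "\<forall>y\<in>A. (Rq E A ^^ (k-1)) x y"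
  proof -
    have "min (Suc (k-1)) (card A) \<le> card {y. (Rq E A ^^ (k-1)) x y}"
      by (rule bfs[OF finA A(2) x])
    then have c1: "card A \<le> card {y. (Rq E A ^^ (k-1)) x y}" using k2 k_def by simp
    have s1: "{y. (Rq E A ^^ (k-1)) x y} \<subseteq> A" using Rq_in[where E=E and S=A and p=x and t="k-1"] x by blast
    have "{y. (Rq E A ^^ (k-1)) x y} = A" by (rule card_seteq[OF finA s1 c1])
    then show ?thesis by blast
  qed
  have "\<forall>j\<in>{1..n}. \<exists>q. q \<in> Q j \<inter> A" using Q by blast
  then have "\<exists>p. \<forall>j\<in>{1..n}. p j \<in> Q j \<inter> A" by (rule bchoice)
  then obtain p where p: "\<forall>j\<in>{1..n}. p j \<in> Q j \<inter> A" by blast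
  define T where "T j = {y. (Rq E (Q j) ^^ (k-1)) (p j) y}" for j
  have TQ: "T j \<subseteq> Q j" if "j \<in> {1..n}" for j
    using Rq_in[where E=E and S="Q j" and p="p j" and t="k-1"] p that unfolding T_def by blast
  have finQ: "finite (Q j)" if "j \<in> {1..n}" for j using Q that finV finite_subset by blast
  have finT: "finite (T j)" if "j \<in> {1..n}" for j using TQ finQ that finite_subset by blast
  have cardT: "k \<le> card (T j)" if j: "j \<in> {1..n}" for j
  proof -
    have "min (Suc (k-1)) (card (Q j)) \<le> card (T j)"
      unfolding T_def by (rule bfs) (use finQ[OF j] Q j p in auto)
    then show ?thesis using Q j k2 k_def by simp
  qed
  define W where "W = A \<union> (\<Union>j\<in>{1..n}. T j)"
  define r where "r = 2 * (k - 1)"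
  have WV: "W \<subseteq> V" unfolding W_def using A(1) TQ Q by blast
  have finW: "finite W" using WV finV finite_subset by blast
  have gW: "graph W (ER E W)" using finW Esym by (auto simp: graph_def ER_def)
  have sW: "subgraph W (ER E W) V E" using gW WV by (auto simp: subgraph_def ER_def)
  have rad: "radius_le W (ER E W) r"
    unfolding radius_le_def
  proof (intro bexI ballI)
    show "x \<in> W" using x W_def by blast
    fix y assume y: "y \<in> W"
    have AW: "A \<subseteq> W" unfolding W_def by blast
    have toA: "(Rq E W ^^ (k-1)) x z" if "z \<in> A" for z
      using Rq_mono_set[OF AW] Aall that by blast
    have "(Rq E W ^^ r) x y"
    proof (cases "y \<in> A")
      case True
      show ?thesis by (rule Rq_mono_t[OF toA[OF True]]) (simp add: r_def)
    next
      case False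
      then obtain j where j: "j \<in> {1..n}" "y \<in> T j" using y W_def by blast
      have "(Rq E (T j) ^^ (k-1)) (p j) y"
        using Rq_restrict[where E=E and Q="Q j" and t="k-1" and p="p j" and y=y] j(2)
        unfolding T_def by blast
      moreover have "T j \<subseteq> W" using j W_def by blast
      ultimately have "(Rq E W ^^ (k-1)) (p j) y" by (rule Rq_mono_set[rotated])
      moreover have "(Rq E W ^^ (k-1)) x (p j)" using toA p j by blast
      ultimately have "(Rq E W ^^ ((k-1) + (k-1))) x y" by (auto simp: relpowp_add)
      then show ?thesis by (simp add: r_def mult_2)
    qed
    then show "(sup (ER E W) (=) ^^ r) x y" by (simp add: Rq_def)
  qed
  have r0: "r > 0" using k2 r_def by simp
  have "card W \<le> growth V E r" by (rule growth_ge[OF g sW rad])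
  then have up: "real (card W) \<le> c * real r" using gr r0 by (smt (verit) of_nat_le_iff)
  have "card (\<Union>j\<in>{1..n}. T j) = (\<Sum>j\<in>{1..n}. card (T j))"
    by (rule card_UN_disjoint) (use finT disj TQ in blast)+
  also have "\<dots> \<ge> (\<Sum>j\<in>{1..n}. k)" by (rule sum_mono) (use cardT in blast)
  finally have "n * k \<le> card (\<Union>j\<in>{1..n}. T j)" by simp
  also have "\<dots> \<le> card W" unfolding W_def by (rule card_mono) (use finW W_def in auto)
  finally have low: "real n * real k \<le> real (card W)" by (metis of_nat_le_iff of_nat_mult)
  have "real r = 2 * real k - 2" using k2 r_def by simp
  then have "real (card W) \<le> c * (2 * real k - 2)" using up by simp
  then have "real n * real k \<le> c * (2 * real k - 2)" using low by linarith
  moreover have "2 * c * real k \<le> real n * real k" using n by (simp add: mult_right_mono)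
  ultimately show False using c by (simp add: algebra_simps)
qed

lemma rt_sym:
  assumes "\<And>a b. R a b \<Longrightarrow> R b a" "R\<^sup>*\<^sup>* x y" shows "R\<^sup>*\<^sup>* y x"
  using assms(2)
proof (induction rule: rtranclp_induct)
  case base then show ?case by simp
next
  case (step y z)
  have "R z y" using assms(1) step(2) .
  then show ?case using step(3) by (rule converse_rtranclp_into_rtranclp)
qed

lemma ER_mono_rt:
  assumes "S \<subseteq> S'" "(ER E S)\<^sup>*\<^sup>* a b" shows "(ER E S')\<^sup>*\<^sup>* a b"
  using assms(2)
proof (induction rule: rtranclp_induct)
  case base then show ?case by simp
next
  case (step y z)
  have "ER E S' y z" using step(2) assms(1) by (auto simp: ER_def)
  with step(3) show ?case by (rule rtranclp.rtrancl_into_rtrancl)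
qed

lemma conn_union:
  assumes sym: "\<And>u v. E u v \<Longrightarrow> E v u" and S: "conn E S" and T: "conn E T"
    and ab: "a \<in> S" "b \<in> T" "E a b"
  shows "conn E (S \<union> T)"
  unfolding conn_def
proof (intro ballI)
  fix u v assume u: "u \<in> S \<union> T" and v: "v \<in> S \<union> T"
  let ?R = "ER E (S \<union> T)"
  have inS: "?R\<^sup>*\<^sup>* x y" if "x \<in> S" "y \<in> S" for x y
    using S that ER_mono_rt[of S "S \<union> T" E x y] by (auto simp: conn_def)
  have inT: "?R\<^sup>*\<^sup>* x y" if "x \<in> T" "y \<in> T" for x y
    using T that ER_mono_rt[of T "S \<union> T" E x y] by (auto simp: conn_def)
  have e1: "?R a b" using ab by (auto simp: ER_def)
  have e2: "?R b a" using ab sym by (auto simp: ER_def)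
  show "?R\<^sup>*\<^sup>* u v"
  proof (cases "u \<in> S")
    case uS: True
    show ?thesis
    proof (cases "v \<in> S")
      case True then show ?thesis using inS uS by blast
    next
      case False
      then have "v \<in> T" using v by blast
      then show ?thesis using inS[OF uS ab(1)] e1 inT[OF ab(2)]
        by (meson rtranclp.rtrancl_into_rtrancl rtranclp_trans)
    qed
  next
    case uS: False
    then have uT: "u \<in> T" using u by blast
    show ?thesis
    proof (cases "v \<in> T")
      case True then show ?thesis using inT uT by blast
    next
      case False
      then have "v \<in> S" using v by blast
      then show ?thesis using inT[OF uT ab(2)] e2 inS[OF ab(1)]
        by (meson rtranclp.rtrancl_into_rtrancl rtranclp_trans)
    qed
  qed
qed

definition model :: "nat \<Rightarrow> 'a set \<Rightarrow> ('a \<Rightarrow> 'a \<Rightarrow> bool) \<Rightarrow> (nat \<times> nat \<Rightarrow> 'a set) \<Rightarrow> bool" where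
  "model n V E B \<longleftrightarrow> (\<forall>g\<in>grid_V n. B g \<noteq> {} \<and> B g \<subseteq> V \<and> conn E (B g)) \<and>
     (\<forall>g\<in>grid_V n. \<forall>h\<in>grid_V n. g \<noteq> h \<longrightarrow> B g \<inter> B h = {}) \<and>
     (\<forall>i j. 1 \<le> i \<and> i \<le> n \<and> 1 \<le> j \<and> j < n \<longrightarrow> (\<exists>a\<in>B (i,j). \<exists>b\<in>B (i, Suc j). E a b)) \<and>
     (\<forall>i j. 1 \<le> i \<and> i < n \<and> 1 \<le> j \<and> j \<le> n \<longrightarrow> (\<exists>a\<in>B (i,j). \<exists>b\<in>B (Suc i, j). E a b))"

lemma model_swap:
  assumes "model n V E B" shows "model n V E (\<lambda>(i,j). B (j,i))"
  using assms unfolding model_def grid_V_def by fastforce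

lemma rows_conn:
  assumes M: "model n V E B" and sym: "\<And>u v. E u v \<Longrightarrow> E v u" and i: "i \<in> {1..n}"
  shows "conn E (\<Union>j\<in>{1..n}. B (i,j))"
proof -
  have "\<forall>m. 1 \<le> m \<longrightarrow> m \<le> n \<longrightarrow> conn E (\<Union>j\<in>{1..m}. B (i,j))"
  proof (intro allI)
    fix m show "1 \<le> m \<longrightarrow> m \<le> n \<longrightarrow> conn E (\<Union>j\<in>{1..m}. B (i,j))"
    proof (induction m)
      case 0 then show ?case by simp
    next
      case (Suc m)
      show ?case
      proof (intro impI)
        assume m1: "1 \<le> Suc m" and mn: "Suc m \<le> n"
        show "conn E (\<Union>j\<in>{1..Suc m}. B (i,j))"
        proof (cases "m = 0")
          case True
          have "(i, 1) \<in> grid_V n" using i mn True by (simp add: grid_V_def)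
          then have "conn E (B (i,1))" using M by (simp add: model_def)
          then show ?thesis using True by simp
        next
          case False
          have IH: "conn E (\<Union>j\<in>{1..m}. B (i,j))" using Suc.IH False mn by simp
          have "(i, Suc m) \<in> grid_V n" using i mn by (simp add: grid_V_def)
          then have cS: "conn E (B (i, Suc m))" using M by (simp add: model_def)
          obtain a b where ab: "a \<in> B (i,m)" "b \<in> B (i, Suc m)" "E a b"
            using M i mn False unfolding model_def by (metis Suc_le_eq atLeastAtMost_iff less_one not_less)
          have a: "a \<in> (\<Union>j\<in>{1..m}. B (i,j))" using ab(1) False by auto
          have eq: "(\<Union>j\<in>{1..Suc m}. B (i,j)) = (\<Union>j\<in>{1..m}. B (i,j)) \<union> B (i, Suc m)"
            by (auto simp: atLeastAtMostSuc_conv)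
          show ?thesis unfolding eq by (rule conn_union[OF sym IH cS a ab(2,3)])
        qed
      qed
    qed
  qed
  then show ?thesis using i by auto
qed

lemma half:
  fixes c :: real
  assumes g: "graph V E" and gr: "\<forall>r::nat. r > 0 \<longrightarrow> real (growth V E r) \<le> c * real r"
    and c: "c > 0" and n: "2 * c \<le> real n" and n2: "2 \<le> n"
    and M: "model n V E B" and i0: "i0 \<in> {1..n}"
    and minc: "\<forall>j\<in>{1..n}. card (\<Union>j'\<in>{1..n}. B (i0,j')) \<le> card (\<Union>i\<in>{1..n}. B (i,j))"
  shows False
proof -
  have finV: "finite V" using g by (simp add: graph_def)
  have sym: "\<And>u v. E u v \<Longrightarrow> E v u" using g by (auto simp: graph_def)
  have Bg: "\<And>i j. i \<in> {1..n} \<Longrightarrow> j \<in> {1..n} \<Longrightarrow> B (i,j) \<noteq> {} \<and> B (i,j) \<subseteq> V"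
    using M by (auto simp: model_def grid_V_def)
  have Bd: "\<And>i j i' j'. i \<in> {1..n} \<Longrightarrow> j \<in> {1..n} \<Longrightarrow> i' \<in> {1..n} \<Longrightarrow> j' \<in> {1..n} \<Longrightarrow>
      (i,j) \<noteq> (i',j') \<Longrightarrow> B (i,j) \<inter> B (i',j') = {}"
    using M unfolding model_def grid_V_def by blast
  define A where "A = (\<Union>j'\<in>{1..n}. B (i0,j'))"
  define Q where "Q j = (\<Union>i\<in>{1..n}. B (i,j))" for j
  have AV: "A \<subseteq> V" using Bg i0 A_def by blast
  have cA: "conn E A" unfolding A_def by (rule rows_conn[OF M sym i0])
  have card2: "2 \<le> card A"
  proof -
    have 1: "1 \<in> {1..n}" and 2: "2 \<in> {1..n}" using n2 by auto
    obtain a where a: "a \<in> B (i0,1)" using Bg[OF i0 1] by blast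
    obtain b where b: "b \<in> B (i0,2)" using Bg[OF i0 2] by blast
    have "a \<noteq> b" using Bd[OF i0 1 i0 2] a b by auto
    moreover have "{a,b} \<subseteq> A" using a b 1 2 A_def by blast
    moreover have "finite A" using AV finV finite_subset by blast
    ultimately show ?thesis by (metis card_2_iff card_mono)
  qed
  have QQ: "\<forall>j\<in>{1..n}. Q j \<subseteq> V \<and> conn E (Q j) \<and> Q j \<inter> A \<noteq> {} \<and> card A \<le> card (Q j)"
  proof (intro ballI conjI)
    fix j assume j: "j \<in> {1..n}"
    show "Q j \<subseteq> V" using Bg j Q_def by blast
    have "conn E (\<Union>i\<in>{1..n}. (\<lambda>(i,j). B (j,i)) (j,i))"
      by (rule rows_conn[OF model_swap[OF M] sym j])
    then show "conn E (Q j)" by (simp add: Q_def)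
    have "B (i0,j) \<subseteq> Q j \<inter> A" using i0 j Q_def A_def by blast
    then show "Q j \<inter> A \<noteq> {}" using Bg[OF i0 j] by blast
    show "card A \<le> card (Q j)" using minc j unfolding A_def Q_def by blast
  qed
  have QD: "\<forall>j\<in>{1..n}. \<forall>j'\<in>{1..n}. j \<noteq> j' \<longrightarrow> Q j \<inter> Q j' = {}"
    unfolding Q_def using Bd by blast
  show False by (rule core[OF g gr c n AV cA card2 QQ QD])
qed

lemma minor_model:
  assumes g: "graph V E" and m: "minor (grid_V n) (grid_E n) V E"
  shows "\<exists>B. model n V E B"
proof -
  obtain W0 F0 C f where s1: "subgraph W0 F0 V E" and s2: "subgraph W0 C W0 F0"
    and bij: "bij_betw f (grid_V n) (contract_V W0 C)"
    and iso: "\<forall>u\<in>grid_V n. \<forall>v\<in>grid_V n. grid_E n u v \<longleftrightarrow> contract_E F0 (f u) (f v)"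
    using m unfolding minor_def graph_iso_def by blast
  have Cp: "C u v \<Longrightarrow> C v u \<and> u \<in> W0 \<and> v \<in> W0 \<and> E u v" for u v
    using s1 s2 unfolding subgraph_def graph_def by blast
  have FE: "F0 u v \<Longrightarrow> E u v" for u v using s1 unfolding subgraph_def by blast
  have W0V: "W0 \<subseteq> V" using s1 unfolding subgraph_def by blast
  have Esym: "\<And>u v. E u v \<Longrightarrow> E v u" using g by (auto simp: graph_def)
  have cls: "\<exists>x\<in>W0. f g = {y. C\<^sup>*\<^sup>* x y}" if "g \<in> grid_V n" for g
    using bij that unfolding bij_betw_def contract_V_def by blast
  have rt_in: "C\<^sup>*\<^sup>* x y \<Longrightarrow> x \<in> W0 \<Longrightarrow> y \<in> W0" for x y
    by (induction rule: rtranclp_induct) (use Cp in blast)+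
  have Csym: "C\<^sup>*\<^sup>* x y \<Longrightarrow> C\<^sup>*\<^sup>* y x" for x y using rt_sym[of C x y] Cp by blast
  have walk: "C\<^sup>*\<^sup>* x y \<Longrightarrow> (ER E {y. C\<^sup>*\<^sup>* x y})\<^sup>*\<^sup>* x y" for x y
  proof (induction rule: rtranclp_induct)
    case base then show ?case by simp
  next
    case (step y z)
    have "ER E {y. C\<^sup>*\<^sup>* x y} y z" using step(1,2) Cp unfolding ER_def
      by (meson mem_Collect_eq rtranclp.rtrancl_into_rtrancl)
    with step(3) show ?case by (rule rtranclp.rtrancl_into_rtrancl)
  qed
  have ERsym: "ER E S a b \<Longrightarrow> ER E S b a" for S a b using Esym by (auto simp: ER_def)
  have P1: "f g \<noteq> {} \<and> f g \<subseteq> V \<and> conn E (f g)" if gg: "g \<in> grid_V n" for g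
  proof -
    obtain x where x: "x \<in> W0" "f g = {y. C\<^sup>*\<^sup>* x y}" using cls[OF gg] by blast
    have "x \<in> f g" using x by simp
    moreover have "f g \<subseteq> V" using x rt_in W0V by blast
    moreover have "conn E (f g)"
      unfolding conn_def
    proof (intro ballI)
      fix u v assume "u \<in> f g" "v \<in> f g"
      then have u: "C\<^sup>*\<^sup>* x u" and v: "C\<^sup>*\<^sup>* x v" using x by auto
      have "(ER E (f g))\<^sup>*\<^sup>* x u" using walk[OF u] x by simp
      then have "(ER E (f g))\<^sup>*\<^sup>* u x" using rt_sym[of "ER E (f g)"] ERsym by blast
      moreover have "(ER E (f g))\<^sup>*\<^sup>* x v" using walk[OF v] x by simp
      ultimately show "(ER E (f g))\<^sup>*\<^sup>* u v" by (rule rtranclp_trans)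
    qed
    ultimately show ?thesis by blast
  qed
  have P2: "f g \<inter> f h = {}" if gh: "g \<in> grid_V n" "h \<in> grid_V n" "g \<noteq> h" for g h
  proof (rule ccontr)
    assume "f g \<inter> f h \<noteq> {}"
    then obtain z where z: "z \<in> f g" "z \<in> f h" by blast
    obtain x where x: "f g = {y. C\<^sup>*\<^sup>* x y}" using cls[OF gh(1)] by blast
    obtain x' where x': "f h = {y. C\<^sup>*\<^sup>* x' y}" using cls[OF gh(2)] by blast
    have xz: "C\<^sup>*\<^sup>* x z" and xz': "C\<^sup>*\<^sup>* x' z" using z x x' by auto
    have "C\<^sup>*\<^sup>* x y \<longleftrightarrow> C\<^sup>*\<^sup>* x' y" for y
      using xz xz' Csym by (meson rtranclp_trans)
    then have "f g = f h" using x x' by auto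
    moreover have "inj_on f (grid_V n)" using bij by (simp add: bij_betw_def)
    ultimately show False using gh by (meson inj_on_def)
  qed
  have P3: "\<exists>a\<in>f u. \<exists>b\<in>f v. E a b" if "u \<in> grid_V n" "v \<in> grid_V n" "grid_E n u v" for u v
    using iso that FE unfolding contract_E_def by blast
  have "model n V E f"
    unfolding model_def
  proof (intro conjI allI impI ballI)
    show "\<And>g. g \<in> grid_V n \<Longrightarrow> f g \<noteq> {}" using P1 by blast
    show "\<And>g. g \<in> grid_V n \<Longrightarrow> f g \<subseteq> V" using P1 by blast
    show "\<And>g. g \<in> grid_V n \<Longrightarrow> conn E (f g)" using P1 by blast
    show "\<And>g h. g \<in> grid_V n \<Longrightarrow> h \<in> grid_V n \<Longrightarrow> g \<noteq> h \<Longrightarrow> f g \<inter> f h = {}" using P2 by blast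
    fix i j
    assume a: "1 \<le> i \<and> i \<le> n \<and> 1 \<le> j \<and> j < n"
    then have "(i,j) \<in> grid_V n" "(i, Suc j) \<in> grid_V n" "grid_E n (i,j) (i, Suc j)"
      by (auto simp: grid_V_def grid_E_def)
    then show "\<exists>a\<in>f (i,j). \<exists>b\<in>f (i, Suc j). E a b" using P3 by blast
  next
    fix i j
    assume a: "1 \<le> i \<and> i < n \<and> 1 \<le> j \<and> j \<le> n"
    then have "(i,j) \<in> grid_V n" "(Suc i, j) \<in> grid_V n" "grid_E n (i,j) (Suc i, j)"
      by (auto simp: grid_V_def grid_E_def)
    then show "\<exists>a\<in>f (i,j). \<exists>b\<in>f (Suc i, j). E a b" using P3 by blast
  qed
  then show ?thesis by blast
qed

theorem theorem9:
  fixes c :: real and V :: "'a set" and E :: "'a \<Rightarrow> 'a \<Rightarrow> bool"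
  assumes "c \<ge> 1"
    and "graph V E"
    and "\<forall>r::nat. r > 0 \<longrightarrow> real (growth V E r) \<le> c * real r"
  shows "\<not> minor (grid_V (nat \<lceil>2 * c\<rceil>)) (grid_E (nat \<lceil>2 * c\<rceil>)) V E"
proof
  define n where "n = nat \<lceil>2 * c\<rceil>"
  assume "minor (grid_V (nat \<lceil>2 * c\<rceil>)) (grid_E (nat \<lceil>2 * c\<rceil>)) V E"
  then have "minor (grid_V n) (grid_E n) V E" by (simp add: n_def)
  then obtain B where M: "model n V E B" using minor_model[OF assms(2)] by blast
  have ce: "2 * c \<le> of_int \<lceil>2 * c\<rceil>" by (rule le_of_int_ceiling)
  have cz: "0 \<le> \<lceil>2 * c\<rceil>" using assms(1) by simp
  have "real n = of_int \<lceil>2 * c\<rceil>" unfolding n_def using cz by simp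
  then have nc: "2 * c \<le> real n" using ce by simp
  have "real n \<ge> 2" using nc assms(1) by simp
  then have n2: "2 \<le> n" by simp
  have c0: "c > 0" using assms(1) by simp
  define R where "R i = card (\<Union>j\<in>{1..n}. B (i,j))" for i
  define K where "K j = card (\<Union>i\<in>{1..n}. B (i,j))" for j
  have "1 \<in> {1..n}" using n2 by simp
  then obtain i0 where i0: "i0 \<in> {1..n}" "\<forall>i. i \<in> {1..n} \<longrightarrow> R i0 \<le> R i"
    using ex_has_least_nat[of "\<lambda>i. i \<in> {1..n}" 1 R] by blast
  obtain j0 where j0: "j0 \<in> {1..n}" "\<forall>j. j \<in> {1..n} \<longrightarrow> K j0 \<le> K j"
    using ex_has_least_nat[of "\<lambda>i. i \<in> {1..n}" 1 K] \<open>1 \<in> {1..n}\<close> by blast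
  show False
  proof (cases "R i0 \<le> K j0")
    case True
    have "\<forall>j\<in>{1..n}. card (\<Union>j'\<in>{1..n}. B (i0,j')) \<le> card (\<Union>i\<in>{1..n}. B (i,j))"
      using True j0 unfolding R_def K_def by (meson order_trans)
    then show False by (rule half[OF assms(2,3) c0 nc n2 M i0(1)])
  next
    case False
    have "\<forall>j\<in>{1..n}. card (\<Union>j'\<in>{1..n}. (\<lambda>(i,j). B (j,i)) (j0,j')) \<le> card (\<Union>i\<in>{1..n}. (\<lambda>(i,j). B (j,i)) (i,j))"
    proof
      fix j assume j: "j \<in> {1..n}"
      have "K j0 \<le> R j" using False i0 j by force
      then show "card (\<Union>j'\<in>{1..n}. (\<lambda>(i,j). B (j,i)) (j0,j')) \<le> card (\<Union>i\<in>{1..n}. (\<lambda>(i,j). B (j,i)) (i,j))"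
        unfolding R_def K_def by simp
    qed
    then show False by (rule half[OF assms(2,3) c0 nc n2 model_swap[OF M] j0(1)])
  qed
qed

end
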